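(* For every integer $N$, the functions $$f_0(z)=q^{N}\frac{\phi_{N-1}(y,z)\,\phi_N(y/q,z)}{\phi_{N-1}(y/q,z)\,\phi_N(y,z)},\qquad f_1(z)=\frac{\phi_{N-1}(y/q,z/q)\,\phi_N(y,z)}{\phi_{N-1}(y,z)\,\phi_N(y/q,z/q)}$$ satisfy the $q$-difference Painlevé III equation $$f_1(qz)=\frac{c^2}{f_0(z)f_1(z)}\cdot\frac{1+z f_0(z)}{z+f_0(z)},\qquad f_0(z/q)=\frac{c^2}{f_0(z)f_1(z)}\cdot\frac{y/z+f_1(z)}{1+(y/z)f_1(z)}$$ with $c=q^N$ (here $y$ is a fixed parameter and $z$ the independent variable).
   Context: $q$ is a fixed nonzero complex constant that is not a root of unity; $y,z$ are variables. For $k\in\mathbb{Z}$ the polynomials $p_k(y,z)$ are defined by the generating function $\sum_{n\ge 0}p_n(y,z)t^n=\frac{(-(1-q)t;q)_\infty}{((1-q)yt;q)_\infty((1-q)zt;q)_\infty}$, with $(a;q)_\infty=\prod_{i\ge0}(1-aq^i)$, and $p_k=0$ for $k<0$; equivalently (via the $q$-binomial expansions) $p_n(y,z)=(1-q)^n\sum_{a+b+c=n}\frac{y^a z^b q^{c(c-1)/2}}{(q;q)_a(q;q)_b(q;q)_c}$ with $(q;q)_m=\prod_{j=1}^m(1-q^j)$. For $N>0$, $\phi_N(y,z)$ is the $N\times N$ determinant $\det\big(p_{N-2i+j+1}(y,z)\big)_{i,j=1}^N$ (first row $p_N,\dots,p_{2N-1}$, last row $p_{-N+2},\dots,p_1$);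 $\phi_0=1$; and for $N<0$, $\phi_N=(-1)^{N(N+1)/2}\phi_{-N-1}$. *)

theory Defs
  imports Complex_Main "Jordan_Normal_Form.Determinant"
begin

definition qpoch :: "complex \<Rightarrow> nat \<Rightarrow> complex" where
  "qpoch q m = (\<Prod>j=1..m. 1 - q ^ j)"

definition pq :: "complex \<Rightarrow> int \<Rightarrow> complex \<Rightarrow> complex \<Rightarrow> complex" where
  "pq q k y z = (if k < 0 then 0 else
     (let n = nat k in (1 - q) ^ n *
       (\<Sum>a\<in>{..n}. \<Sum>b\<in>{..n - a}. let c = n - a - b in
          y ^ a * z ^ b * q ^ (c * (c - 1) div 2) / (qpoch q a * qpoch q b * qpoch q c))))"

text \<open>For n > 0: the n x n determinant det (p_{n-2i+j+1})_{i,j=1..n};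
  with 0-based indices i,j this is p_{n-2i+j}.\<close>
definition phi_nat :: "complex \<Rightarrow> nat \<Rightarrow> complex \<Rightarrow> complex \<Rightarrow> complex" where
  "phi_nat q n y z = (if n = 0 then 1 else
     det (mat n n (\<lambda>(i, j). pq q (int n - 2 * int i + int j) y z)))"

definition phi :: "complex \<Rightarrow> int \<Rightarrow> complex \<Rightarrow> complex \<Rightarrow> complex" where
  "phi q N y z = (if N \<ge> 0 then phi_nat q (nat N) y z
     else (-1) ^ nat (N * (N + 1) div 2) * phi_nat q (nat (- N - 1)) y z)"

definition f0 :: "complex \<Rightarrow> int \<Rightarrow> complex \<Rightarrow> complex \<Rightarrow> complex" where
  "f0 q N y z = q powi N * (phi q (N - 1) y z * phi q N (y / q) z)
     / (phi q (N - 1) (y / q) z * phi q N y z)"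

definition f1 :: "complex \<Rightarrow> int \<Rightarrow> complex \<Rightarrow> complex \<Rightarrow> complex" where
  "f1 q N y z = (phi q (N - 1) (y / q) (z / q) * phi q N y z)
     / (phi q (N - 1) y z * phi q N (y / q) (z / q))"

end

theory Submission
  imports Defs "HOL-Combinatorics.Permutations"
begin


definition Dt :: "nat \<Rightarrow> (nat \<Rightarrow> nat \<Rightarrow> complex) \<Rightarrow> complex" where
  "Dt n c = det (mat n n (\<lambda>(i,j). c j i))"

lemma Dt_cong:
  assumes "\<And>i j. i < n \<Longrightarrow> j < n \<Longrightarrow> c j i = c' j i"
  shows "Dt n c = Dt n c'"
  unfolding Dt_def by (rule arg_cong[where f=det]) (auto intro!: eq_matI simp: assms)

lemma Dt_expand:
  assumes "k < n"
  shows "Dt n c = (\<Sum>i<n. c k i * cofactor (mat n n (\<lambda>(i,j). c j i)) i k)"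
  unfolding Dt_def using assms
  by (subst laplace_expansion_column[OF _ assms]) (auto intro!: sum.cong)

lemma cofactor_upd:
  assumes "k < n"
  shows "cofactor (mat n n (\<lambda>(i,j). (c(k:=f)) j i)) i k = cofactor (mat n n (\<lambda>(i,j). c j i)) i k"
  unfolding cofactor_def mat_delete_def
  by (rule arg_cong[where f="\<lambda>x. (-1)^(i+k) * det x"]) (auto intro!: eq_matI)

lemma Dt_upd:
  assumes "k < n"
  shows "Dt n (c(k:=f)) = (\<Sum>i<n. f i * cofactor (mat n n (\<lambda>(i,j). c j i)) i k)"
  unfolding Dt_expand[OF assms, of "c(k:=f)"] cofactor_upd[OF assms] by simp

lemma Dt_lin:
  assumes "k < n"
  shows "Dt n (c(k := (\<lambda>i. x * u i + y * v i))) = x * Dt n (c(k:=u)) + y * Dt n (c(k:=v))"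
  unfolding Dt_upd[OF assms]
  by (simp add: sum_distrib_left sum.distrib algebra_simps)

lemma Dt_dup:
  assumes "k < n" "l < n" "k \<noteq> l" "\<And>i. i < n \<Longrightarrow> c k i = c l i"
  shows "Dt n c = 0"
  unfolding Dt_def
  by (rule det_identical_columns[of _ n k l]) (auto intro!: eq_vecI simp: assms)

lemma Dt_colop_aux:
  assumes "m \<le> n"
  shows "Dt n (\<lambda>j. if k < j \<and> m \<le> j then (\<lambda>i. c j i - a * c (j - 1) i) else c j) = Dt n c"
  using assms
proof (induction "n - m" arbitrary: m)
  case 0
  then show ?case by (intro Dt_cong) auto
next
  case (Suc x)
  let ?T = "\<lambda>m. (\<lambda>j. if k < j \<and> m \<le> j then (\<lambda>i. c j i - a * c (j - 1) i) else c j)"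
  have IH: "Dt n (?T (Suc m)) = Dt n c" using Suc by auto
  show ?case
  proof (cases "k < m")
    case False
    then have "?T m = ?T (Suc m)" by (auto simp: fun_eq_iff)
    then show ?thesis using IH by simp
  next
    case True
    have mn: "m < n" using Suc by auto
    have eq: "?T m = (?T (Suc m))(m := (\<lambda>i. 1 * ?T (Suc m) m i + (- a) * ?T (Suc m) (m - 1) i))"
      using True by (auto simp: fun_eq_iff)
    have z: "Dt n ((?T (Suc m))(m := ?T (Suc m) (m - 1))) = 0"
      by (rule Dt_dup[of m n "m - 1"]) (use True mn in auto)
    have "Dt n (?T m) = 1 * Dt n ((?T (Suc m))(m := ?T (Suc m) m)) + (- a) * Dt n ((?T (Suc m))(m := ?T (Suc m) (m - 1)))"
      unfolding eq by (rule Dt_lin[OF mn])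
    also have "(?T (Suc m))(m := ?T (Suc m) m) = ?T (Suc m)" by (rule fun_upd_triv)
    finally have "Dt n (?T m) = 1 * Dt n (?T (Suc m)) + (- a) * Dt n ((?T (Suc m))(m := ?T (Suc m) (m - 1)))" .
    then show ?thesis unfolding z IH by simp
  qed
qed

lemma Dt_colop:
  "Dt n (\<lambda>j. if k < j then (\<lambda>i. c j i - a * c (j - 1) i) else c j) = Dt n c"
  using Dt_colop_aux[of 0 n k c a] by simp

lemma Dt_e0:
  assumes "c 0 0 = 1" "\<And>i. 0 < i \<Longrightarrow> i < Suc m \<Longrightarrow> c 0 i = 0"
  shows "Dt (Suc m) c = Dt m (\<lambda>j i. c (Suc j) (Suc i))"
proof -
  have "Dt (Suc m) c = (\<Sum>i<Suc m. c 0 i * cofactor (mat (Suc m) (Suc m) (\<lambda>(i,j). c j i)) i 0)"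
    by (rule Dt_expand) simp
  also have "\<dots> = c 0 0 * cofactor (mat (Suc m) (Suc m) (\<lambda>(i,j). c j i)) 0 0"
    unfolding sum.lessThan_Suc_shift using assms(2) by simp
  also have "\<dots> = Dt m (\<lambda>j i. c (Suc j) (Suc i))"
    unfolding cofactor_def mat_delete_def Dt_def assms(1)
    by (auto intro!: arg_cong[where f=det] eq_matI)
  finally show ?thesis .
qed

lemma Dt_last:
  assumes "c m m = 1" "\<And>j. j < m \<Longrightarrow> c j m = 0"
  shows "Dt (Suc m) c = Dt m c"
proof -
  let ?A = "mat (Suc m) (Suc m) (\<lambda>(i,j). c j i)"
  have "Dt (Suc m) c = (\<Sum>j<Suc m. ?A $$ (m,j) * cofactor ?A m j)"
    unfolding Dt_def by (rule laplace_expansion_row) auto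
  also have "\<dots> = ?A $$ (m,m) * cofactor ?A m m"
    unfolding sum.lessThan_Suc using assms(2) by simp
  also have "\<dots> = Dt m c"
    unfolding cofactor_def mat_delete_def Dt_def using assms(1)
    by (auto intro!: arg_cong[where f=det] eq_matI)
  finally show ?thesis .
qed

lemma Dt_rot:
  "Dt (Suc m) (\<lambda>j. if j = 0 then c m else c (j - 1)) = (-1)^m * Dt (Suc m) c"
proof -
  let ?A = "mat (Suc m) (Suc m) (\<lambda>(i,j). c j i)"
  have "swap_col_to_front ?A m = mat (Suc m) (Suc m) (\<lambda>(i,j). (if j = 0 then c m else c (j - 1)) i)"
    by (subst swap_col_to_front_result[of _ "Suc m" "Suc m"]) (auto intro!: eq_matI)
  moreover have "det (swap_col_to_front ?A m) = (-1)^m * det ?A"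
    by (rule swap_col_to_front_det) auto
  ultimately show ?thesis unfolding Dt_def by simp
qed

lemma Dt_cramer:
  assumes "r < n"
  shows "(\<Sum>j<Suc n. (-1)^j * v j r * Dt n (\<lambda>j'. if j' < j then v j' else v (Suc j'))) = 0"
proof -
  let ?A = "mat (Suc n) (Suc n) (\<lambda>(i,j). if i = 0 then v j r else v j (i - 1))"
  have "det ?A = 0"
    by (rule det_identical_rows[of _ "Suc n" 0 "Suc r"]) (use assms in \<open>auto intro!: eq_vecI\<close>)
  moreover have "det ?A = (\<Sum>j<Suc n. ?A $$ (0,j) * cofactor ?A 0 j)"
    by (rule laplace_expansion_row) auto
  moreover have "cofactor ?A 0 j = (-1)^j * Dt n (\<lambda>j'. if j' < j then v j' else v (Suc j'))" for j
    unfolding cofactor_def mat_delete_def Dt_def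
    by (auto intro!: arg_cong[where f=det] eq_matI)
  ultimately show ?thesis by (simp add: mult.assoc mult.left_commute)
qed



definition PsiF :: "nat \<Rightarrow> (nat \<Rightarrow> nat \<Rightarrow> complex) \<Rightarrow> (nat \<Rightarrow> complex) \<Rightarrow> (nat \<Rightarrow> complex) \<Rightarrow> complex" where
  "PsiF n F x y = Dt n (F(0:=x, 1:=y))"

lemma Psi_lin1:
  assumes "2 \<le> n"
  shows "PsiF n F (\<lambda>i. c1 * x1 i + c2 * x2 i) y = c1 * PsiF n F x1 y + c2 * PsiF n F x2 y"
proof -
  have e: "\<And>X. F(0:=X, 1:=y) = (F(1:=y))(0:=X)" by (auto simp: fun_eq_iff)
  show ?thesis unfolding PsiF_def e by (rule Dt_lin) (use assms in auto)
qed

lemma Psi_lin2: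
  assumes "2 \<le> n"
  shows "PsiF n F x (\<lambda>i. c1 * y1 i + c2 * y2 i) = c1 * PsiF n F x y1 + c2 * PsiF n F x y2"
  unfolding PsiF_def by (rule Dt_lin) (use assms in auto)

lemma Psi_alt:
  assumes "2 \<le> n"
  shows "PsiF n F x x = 0"
  unfolding PsiF_def by (rule Dt_dup[of 0 n 1]) (use assms in auto)

lemma Psi_add1:
  assumes "2 \<le> n"
  shows "PsiF n F (\<lambda>i. x1 i + c * x2 i) y = PsiF n F x1 y + c * PsiF n F x2 y"
  using Psi_lin1[OF assms, of F 1 x1 c x2 y] by simp

lemma Psi_add2:
  assumes "2 \<le> n"
  shows "PsiF n F x (\<lambda>i. y1 i + c * y2 i) = PsiF n F x y1 + c * PsiF n F x y2"
  using Psi_lin2[OF assms, of F x 1 y1 c y2] by simp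

lemma Psi_anti:
  assumes "2 \<le> n"
  shows "PsiF n F y x = - PsiF n F x y"
proof -
  have "0 = PsiF n F (\<lambda>i. x i + 1 * y i) (\<lambda>i. x i + 1 * y i)" using Psi_alt[OF assms] by simp
  also have "\<dots> = PsiF n F x x + PsiF n F x y + PsiF n F y x + PsiF n F y y"
    unfolding Psi_add1[OF assms] Psi_add2[OF assms] by simp
  finally show ?thesis using Psi_alt[OF assms] by (simp add: eq_neg_iff_add_eq_0 add.commute)
qed

lemma Psi_zeroF:
  assumes "2 \<le> k" "k < n"
  shows "PsiF n F x (F k) = 0"
  unfolding PsiF_def by (rule Dt_dup[of 1 n k]) (use assms in auto)

lemma Psi_pluecker:
  assumes n: "2 \<le> n"
  shows "PsiF n F x y * PsiF n F u w - PsiF n F x u * PsiF n F y w + PsiF n F x w * PsiF n F y u = 0"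
proof -
  define v where "v = (\<lambda>j::nat. if j = 0 then y else if j = 1 then u else if j = 2 then w else F (j - 1))"
  define D where "D = (\<lambda>j. Dt n (\<lambda>j'. if j' < j then v j' else v (Suc j')))"
  define C where "C = (\<lambda>r. cofactor (mat n n (\<lambda>(i,j). (F(0:=x)) j i)) r 1)"
  have Psi_x: "PsiF n F x z = (\<Sum>r<n. z r * C r)" for z
    unfolding PsiF_def C_def by (rule Dt_upd) (use n in auto)
  have cr: "(\<Sum>j<Suc n. (-1)^j * v j r * D j) = 0" if "r < n" for r
    unfolding D_def by (rule Dt_cramer[OF that])
  have "0 = (\<Sum>r<n. C r * (\<Sum>j<Suc n. (-1)^j * v j r * D j))"
    using cr by simp
  also have "\<dots> = (\<Sum>j<Suc n. (-1)^j * D j * (\<Sum>r<n. v j r * C r))"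
    unfolding sum_distrib_left
    by (subst sum.swap) (rule sum.cong[OF refl], rule sum.cong[OF refl], simp only: mult_ac)
  also have "\<dots> = (\<Sum>j<Suc n. (-1)^j * D j * PsiF n F x (v j))"
    by (simp add: Psi_x)
  also have "\<dots> = (\<Sum>j\<in>{0,1,2}. (-1)^j * D j * PsiF n F x (v j))"
  proof (rule sum.mono_neutral_right)
    show "{0, 1, 2} \<subseteq> {..<Suc n}" using n by auto
    show "\<forall>i\<in>{..<Suc n} - {0, 1, 2}. (- 1) ^ i * D i * PsiF n F x (v i) = 0"
    proof
      fix j assume j: "j \<in> {..<Suc n} - {0, 1, 2}"
      then have "v j = F (j - 1)" unfolding v_def by auto
      moreover have "PsiF n F x (F (j - 1)) = 0" by (rule Psi_zeroF) (use j in auto)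
      ultimately show "(- 1) ^ j * D j * PsiF n F x (v j) = 0" by simp
    qed
  qed simp
  also have "\<dots> = D 0 * PsiF n F x y - D 1 * PsiF n F x u + D 2 * PsiF n F x w"
    by (simp add: v_def)
  finally have main: "D 0 * PsiF n F x y - D 1 * PsiF n F x u + D 2 * PsiF n F x w = 0" by simp
  have D0: "D 0 = PsiF n F u w" unfolding D_def PsiF_def by (rule Dt_cong) (auto simp: v_def)
  have D1: "D 1 = PsiF n F y w" unfolding D_def PsiF_def by (rule Dt_cong) (auto simp: v_def)
  have D2: "D 2 = PsiF n F y u" unfolding D_def PsiF_def by (rule Dt_cong) (auto simp: v_def)
  show ?thesis using main unfolding D0 D1 D2 by (simp add: algebra_simps)
qed



definition colz :: "nat \<Rightarrow> (int \<Rightarrow> complex) \<Rightarrow> int \<Rightarrow> nat \<Rightarrow> complex" where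
  "colz n s j i = s (int n - 2 * int i + j)"

definition tau :: "nat \<Rightarrow> (int \<Rightarrow> complex) \<Rightarrow> complex" where
  "tau n s = Dt n (\<lambda>j. colz n s (int j))"

definition Lop :: "complex \<Rightarrow> (int \<Rightarrow> complex) \<Rightarrow> int \<Rightarrow> complex" where
  "Lop a s k = s k - a * s (k - 1)"

definition e0 :: "nat \<Rightarrow> complex" where
  "e0 i = (if i = 0 then 1 else 0)"

lemma colz_Lop: "colz n (Lop a s) j i = colz n s j i - a * colz n s (j - 1) i"
  unfolding colz_def Lop_def by (simp add: algebra_simps)

lemma tau_repA:
  "tau n s = Dt n (\<lambda>j. if j = 0 then colz n s 0 else colz n (Lop a s) (int j))"
proof -
  have "tau n s = Dt n (\<lambda>j. if 0 < j then (\<lambda>i. colz n s (int j) i - a * colz n s (int (j - 1)) i) else colz n s (int j))"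
    unfolding tau_def by (rule Dt_colop[symmetric])
  also have "\<dots> = Dt n (\<lambda>j. if j = 0 then colz n s 0 else colz n (Lop a s) (int j))"
    by (rule Dt_cong) (auto simp: colz_Lop of_nat_diff)
  finally show ?thesis .
qed

lemma tau_repAA:
  "tau n s = Dt n (\<lambda>j. if j = 0 then colz n s 0 else if j = 1 then colz n (Lop a s) 1
      else colz n (Lop b (Lop a s)) (int j))"
proof -
  let ?c = "\<lambda>j. if j = 0 then colz n s 0 else colz n (Lop a s) (int j)"
  have "tau n s = Dt n ?c" by (rule tau_repA)
  also have "\<dots> = Dt n (\<lambda>j. if 1 < j then (\<lambda>i. ?c j i - b * ?c (j - 1) i) else ?c j)"
    by (rule Dt_colop[symmetric])
  also have "\<dots> = Dt n (\<lambda>j. if j = 0 then colz n s 0 else if j = 1 then colz n (Lop a s) 1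
      else colz n (Lop b (Lop a s)) (int j))"
    by (rule Dt_cong) (auto simp: colz_Lop[of _ b] of_nat_diff)
  finally show ?thesis .
qed

lemma tau_rowdel:
  "tau m s = Dt (Suc m) (\<lambda>j. if j = 0 then e0 else colz (Suc m) s (int j))"
  unfolding tau_def
  by (subst Dt_e0) (auto simp: e0_def colz_def intro!: Dt_cong arg_cong[where f=s])

lemma tau_rowdelA:
  "tau m s = Dt (Suc m) (\<lambda>j. if j = 0 then e0 else if j = 1 then colz (Suc m) s 1
     else colz (Suc m) (Lop a s) (int j))"
proof -
  let ?c = "\<lambda>j. if j = 0 then e0 else colz (Suc m) s (int j)"
  have "tau m s = Dt (Suc m) ?c" by (rule tau_rowdel)
  also have "\<dots> = Dt (Suc m) (\<lambda>j. if 1 < j then (\<lambda>i. ?c j i - a * ?c (j - 1) i) else ?c j)"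
    by (rule Dt_colop[symmetric])
  also have "\<dots> = Dt (Suc m) (\<lambda>j. if j = 0 then e0 else if j = 1 then colz (Suc m) s 1
     else colz (Suc m) (Lop a s) (int j))"
    by (rule Dt_cong) (auto simp: colz_Lop of_nat_diff)
  finally show ?thesis .
qed

definition nice :: "(int \<Rightarrow> complex) \<Rightarrow> bool" where
  "nice s \<longleftrightarrow> s 0 = 1 \<and> (\<forall>k<0. s k = 0)"

lemma nice_Lop: "nice s \<Longrightarrow> nice (Lop a s)"
  unfolding nice_def Lop_def by auto

lemma tau_coldel:
  assumes "nice s"
  shows "tau m s = Dt (Suc m) (\<lambda>j. colz (Suc m) s (int j - 1))"
proof -
  have "Dt (Suc m) (\<lambda>j. colz (Suc m) s (int j - 1)) = Dt m (\<lambda>j. colz (Suc m) s (int j - 1))"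
    by (rule Dt_last) (use assms in \<open>auto simp: nice_def colz_def\<close>)
  also have "\<dots> = tau m s"
    unfolding tau_def by (rule Dt_cong) (auto simp: colz_def intro!: arg_cong[where f=s])
  finally show ?thesis by simp
qed

lemma tau_coldelA:
  assumes "nice s"
  shows "tau m s = Dt (Suc m) (\<lambda>j. if j = 0 then colz (Suc m) s (-1) else colz (Suc m) (Lop a s) (int j - 1))"
proof -
  let ?c = "\<lambda>j. colz (Suc m) s (int j - 1)"
  have "tau m s = Dt (Suc m) ?c" by (rule tau_coldel[OF assms])
  also have "\<dots> = Dt (Suc m) (\<lambda>j. if 0 < j then (\<lambda>i. ?c j i - a * ?c (j - 1) i) else ?c j)"
    by (rule Dt_colop[symmetric])
  also have "\<dots> = Dt (Suc m) (\<lambda>j. if j = 0 then colz (Suc m) s (-1) else colz (Suc m) (Lop a s) (int j - 1))"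
    by (rule Dt_cong) (auto simp: colz_Lop of_nat_diff)
  finally show ?thesis .
qed

lemma tau_coldelAA:
  assumes "nice s"
  shows "tau m s = Dt (Suc m) (\<lambda>j. if j = 0 then colz (Suc m) s (-1) else if j = 1 then colz (Suc m) (Lop a s) 0
     else colz (Suc m) (Lop b (Lop a s)) (int j - 1))"
proof -
  let ?c = "\<lambda>j. if j = 0 then colz (Suc m) s (-1) else colz (Suc m) (Lop a s) (int j - 1)"
  have "tau m s = Dt (Suc m) ?c" by (rule tau_coldelA[OF assms])
  also have "\<dots> = Dt (Suc m) (\<lambda>j. if 1 < j then (\<lambda>i. ?c j i - b * ?c (j - 1) i) else ?c j)"
    by (rule Dt_colop[symmetric])
  also have "\<dots> = Dt (Suc m) (\<lambda>j. if j = 0 then colz (Suc m) s (-1) else if j = 1 then colz (Suc m) (Lop a s) 0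
     else colz (Suc m) (Lop b (Lop a s)) (int j - 1))"
    by (rule Dt_cong) (auto simp: colz_Lop[of _ b] of_nat_diff)
  finally show ?thesis .
qed

lemma tau_0[simp]: "tau 0 s = 1"
  unfolding tau_def Dt_def by simp

lemma tau_1: "tau 1 s = s 1"
  unfolding tau_def Dt_def by (subst det_single) (auto simp: colz_def)

lemma Lop_comm: "Lop a (Lop b s) = Lop b (Lop a s)"
  unfolding Lop_def by (auto simp: fun_eq_iff algebra_simps)



lemma alg_R:
  fixes E Pxy Pex Pyu Pey Pxu a b :: complex
  assumes "E * Pxy + Pex * Pyu - Pey * Pxu = 0"
  shows "E * (a * (Pxu + b * Pxy) - b * Pyu) = a * (E + b * Pey) * Pxu - b * (E + a * Pex) * Pyu"
proof -
  have "E * (a * (Pxu + b * Pxy) - b * Pyu) - (a * (E + b * Pey) * Pxu - b * (E + a * Pex) * Pyu)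
     = a * b * (E * Pxy + Pex * Pyu - Pey * Pxu)" by (simp add: algebra_simps)
  then show ?thesis using assms by simp
qed

lemma tau_R:
  assumes ga: "ga = Lop b d" and gb: "gb = Lop a d" and g: "g = Lop a ga" and n: "1 \<le> n"
  shows "(a - b) * tau (n - 1) g * tau n d = a * tau (n - 1) gb * tau n ga - b * tau (n - 1) ga * tau n gb"
proof (cases "n = 1")
  case True
  then show ?thesis using assms by (simp add: tau_1[simplified] Lop_def algebra_simps)
next
  case False
  define m where "m = n - 2"
  have Nm: "n = Suc (Suc m)" using n False unfolding m_def by simp
  define N where "N = Suc (Suc m)"
  have N2: "2 \<le> N" unfolding N_def by simp
  have gb': "g = Lop b gb" unfolding g ga gb by (rule Lop_comm)
  define F where "F = (\<lambda>j. colz N g (int j))"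
  define Psi where "Psi = PsiF N F"
  have t_ga: "tau N ga = Psi (colz N ga 0) (colz N g 1)"
    unfolding Psi_def PsiF_def F_def tau_repA[of N ga a] g[symmetric]
    by (rule Dt_cong) auto
  have t_gb: "tau N gb = Psi (colz N gb 0) (colz N g 1)"
    unfolding Psi_def PsiF_def F_def tau_repA[of N gb b] gb'[symmetric]
    by (rule Dt_cong) auto
  have t_d: "tau N d = Psi (colz N d 0) (colz N gb 1)"
    unfolding Psi_def PsiF_def F_def tau_repAA[of N d a b] gb[symmetric] gb'[symmetric]
    by (rule Dt_cong) auto
  have s_g: "tau (Suc m) g = Psi e0 (colz N g 1)"
    unfolding Psi_def PsiF_def F_def tau_rowdel[of "Suc m" g] N_def
    by (rule Dt_cong) auto
  have s_ga: "tau (Suc m) ga = Psi e0 (colz N ga 1)"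
    unfolding Psi_def PsiF_def F_def tau_rowdelA[of "Suc m" ga a] N_def g[symmetric]
    by (rule Dt_cong) auto
  have s_gb: "tau (Suc m) gb = Psi e0 (colz N gb 1)"
    unfolding Psi_def PsiF_def F_def tau_rowdelA[of "Suc m" gb b] N_def gb'[symmetric]
    by (rule Dt_cong) auto
  define u where "u = colz N g 1"
  define x where "x = colz N ga 0"
  define y where "y = colz N gb 0"
  define D where "D = colz N d 0"
  have ga1: "colz N ga 1 = (\<lambda>i. u i + a * x i)"
    unfolding u_def x_def g by (auto simp: fun_eq_iff colz_Lop)
  have gb1: "colz N gb 1 = (\<lambda>i. u i + b * y i)"
    unfolding u_def y_def gb' by (auto simp: fun_eq_iff colz_Lop)
  have Dd: "(\<lambda>i. a * x i + (- b) * y i) = (\<lambda>i. (a - b) * D i + 0 * D i)"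
    unfolding x_def y_def D_def ga gb by (auto simp: fun_eq_iff colz_Lop algebra_simps)
  have lin1: "Psi (\<lambda>i. c1 * x1 i + c2 * x2 i) z = c1 * Psi x1 z + c2 * Psi x2 z" for c1 c2 x1 x2 z
    unfolding Psi_def by (rule Psi_lin1[OF N2])
  have add2: "Psi z (\<lambda>i. y1 i + c * y2 i) = Psi z y1 + c * Psi z y2" for c y1 y2 z
    unfolding Psi_def by (rule Psi_add2[OF N2])
  have alt: "Psi z z = 0" for z unfolding Psi_def by (rule Psi_alt[OF N2])
  have anti: "Psi z1 z2 = - Psi z2 z1" for z1 z2 unfolding Psi_def by (rule Psi_anti[OF N2])
  have pl: "Psi e0 u * Psi x y - Psi e0 x * Psi u y + Psi e0 y * Psi u x = 0"
    unfolding Psi_def by (rule Psi_pluecker[OF N2])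
  have key: "(a - b) * Psi D (\<lambda>i. u i + b * y i) = a * (Psi x u + b * Psi x y) - b * Psi y u"
  proof -
    have "(a - b) * Psi D (\<lambda>i. u i + b * y i) = Psi (\<lambda>i. (a - b) * D i + 0 * D i) (\<lambda>i. u i + b * y i)"
      using lin1[of "a - b" D 0 D "(\<lambda>i. u i + b * y i)"] by simp
    also have "\<dots> = a * Psi x (\<lambda>i. u i + b * y i) - b * Psi y (\<lambda>i. u i + b * y i)"
      unfolding Dd[symmetric] lin1 by simp
    also have "\<dots> = a * (Psi x u + b * Psi x y) - b * Psi y u"
      unfolding add2 alt by simp
    finally show ?thesis .
  qed
  have "(a - b) * tau (n - 1) g * tau n d = Psi e0 u * ((a - b) * Psi D (\<lambda>i. u i + b * y i))"
    using s_g t_d gb1 unfolding Nm N_def u_def D_def by simp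
  also have "\<dots> = Psi e0 u * (a * (Psi x u + b * Psi x y) - b * Psi y u)" unfolding key ..
  also have "\<dots> = a * (Psi e0 u + b * Psi e0 y) * Psi x u - b * (Psi e0 u + a * Psi e0 x) * Psi y u"
    by (rule alg_R) (use pl anti[of u y] anti[of u x] in simp)
  also have "\<dots> = a * tau (n - 1) gb * tau n ga - b * tau (n - 1) ga * tau n gb"
    using s_gb s_ga t_ga t_gb ga1 gb1 unfolding Nm N_def u_def x_def y_def by (simp add: add2)
  finally show ?thesis .
qed

lemma alg_C:
  fixes Wu Pxy Wx Pyu Wy Pxu a b sg :: complex
  assumes "Wu * Pxy + Wx * Pyu - Wy * Pxu = 0"
  shows "sg * Wu * (a * (Pxu + b * Pxy) - b * Pyu) = a * Pxu * (sg * (Wu + b * Wy)) - b * Pyu * (sg * (Wu + a * Wx))"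
proof -
  have "sg * Wu * (a * (Pxu + b * Pxy) - b * Pyu) - (a * Pxu * (sg * (Wu + b * Wy)) - b * Pyu * (sg * (Wu + a * Wx)))
     = sg * a * b * (Wu * Pxy + Wx * Pyu - Wy * Pxu)" by (simp add: algebra_simps)
  then show ?thesis using assms by simp
qed

lemma tau_C:
  assumes ga: "ga = Lop b d" and gb: "gb = Lop a d" and g: "g = Lop a ga" and nd: "nice d" and n: "1 \<le> n"
  shows "(a - b) * tau (n - 1) d * tau n g = a * tau (n - 1) ga * tau n gb - b * tau (n - 1) gb * tau n ga"
proof (cases "n = 1")
  case True
  then show ?thesis using assms by (simp add: tau_1[simplified] Lop_def algebra_simps nice_def)
next
  case False
  define m where "m = n - 2"
  have Nm: "n = Suc (Suc m)" using n False unfolding m_def by simp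
  define N where "N = Suc (Suc m)"
  have N2: "2 \<le> N" unfolding N_def by simp
  have gb': "g = Lop b gb" unfolding g ga gb by (rule Lop_comm)
  have nga: "nice ga" unfolding ga by (rule nice_Lop[OF nd])
  have ngb: "nice gb" unfolding gb by (rule nice_Lop[OF nd])
  define F where "F = (\<lambda>j. colz N g (int j - 1))"
  define Psi where "Psi = PsiF N F"
  have s_ga: "tau (Suc m) ga = Psi (colz N ga (-1)) (colz N g 0)"
    unfolding Psi_def PsiF_def F_def tau_coldelA[OF nga, of "Suc m" a] N_def g[symmetric]
    by (rule Dt_cong) auto
  have s_gb: "tau (Suc m) gb = Psi (colz N gb (-1)) (colz N g 0)"
    unfolding Psi_def PsiF_def F_def tau_coldelA[OF ngb, of "Suc m" b] N_def gb'[symmetric]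
    by (rule Dt_cong) auto
  have s_d: "tau (Suc m) d = Psi (colz N d (-1)) (colz N gb 0)"
    unfolding Psi_def PsiF_def F_def tau_coldelAA[OF nd, of "Suc m" a b] N_def gb[symmetric] gb'[symmetric]
    by (rule Dt_cong) auto
  have sg2: "((-1::complex)^(Suc m)) * (-1)^(Suc m) = 1"
    by (simp add: power_mult_distrib[symmetric])
  have rot: "tau N s = (-1)^(Suc m) * Dt N (\<lambda>j. if j = 0 then c (Suc m) else c (j - 1))"
    if "tau N s = Dt N c" for s c
  proof -
    have "Dt N (\<lambda>j. if j = 0 then c (Suc m) else c (j - 1)) = (-1)^(Suc m) * Dt N c"
      unfolding N_def by (rule Dt_rot)
    then show ?thesis using that sg2 by (simp add: mult.assoc[symmetric])
  qed
  define w where "w = colz N g (int (Suc m))"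
  define u where "u = colz N g 0"
  define x where "x = colz N ga (-1)"
  define y where "y = colz N gb (-1)"
  define D where "D = colz N d (-1)"
  have t_g: "tau N g = (-1)^(Suc m) * Psi w u"
  proof -
    have "tau N g = (-1)^(Suc m) * Dt N (\<lambda>j. if j = 0 then colz N g (int (Suc m)) else colz N g (int (j - 1)))"
      by (rule rot) (simp add: tau_def)
    also have "Dt N (\<lambda>j. if j = 0 then colz N g (int (Suc m)) else colz N g (int (j - 1))) = Psi w u"
      unfolding Psi_def PsiF_def F_def w_def u_def by (rule Dt_cong) (auto simp: of_nat_diff)
    finally show ?thesis .
  qed
  have t_ga: "tau N ga = (-1)^(Suc m) * Psi w (colz N ga 0)"
  proof -
    have "tau N ga = (-1)^(Suc m) * Dt N (\<lambda>j. if j = 0 then (\<lambda>j. if j = 0 then colz N ga 0 else colz N g (int j)) (Suc m)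
         else (\<lambda>j. if j = 0 then colz N ga 0 else colz N g (int j)) (j - 1))"
      by (rule rot) (use tau_repA[of N ga a] in \<open>unfold g[symmetric]\<close>)
    also have "Dt N (\<lambda>j. if j = 0 then (\<lambda>j. if j = 0 then colz N ga 0 else colz N g (int j)) (Suc m)
         else (\<lambda>j. if j = 0 then colz N ga 0 else colz N g (int j)) (j - 1)) = Psi w (colz N ga 0)"
      unfolding Psi_def PsiF_def F_def w_def by (rule Dt_cong) (auto simp: of_nat_diff)
    finally show ?thesis .
  qed
  have t_gb: "tau N gb = (-1)^(Suc m) * Psi w (colz N gb 0)"
  proof -
    have "tau N gb = (-1)^(Suc m) * Dt N (\<lambda>j. if j = 0 then (\<lambda>j. if j = 0 then colz N gb 0 else colz N g (int j)) (Suc m)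
         else (\<lambda>j. if j = 0 then colz N gb 0 else colz N g (int j)) (j - 1))"
      by (rule rot) (use tau_repA[of N gb b] in \<open>unfold gb'[symmetric]\<close>)
    also have "Dt N (\<lambda>j. if j = 0 then (\<lambda>j. if j = 0 then colz N gb 0 else colz N g (int j)) (Suc m)
         else (\<lambda>j. if j = 0 then colz N gb 0 else colz N g (int j)) (j - 1)) = Psi w (colz N gb 0)"
      unfolding Psi_def PsiF_def F_def w_def by (rule Dt_cong) (auto simp: of_nat_diff)
    finally show ?thesis .
  qed
  have ga0: "colz N ga 0 = (\<lambda>i. u i + a * x i)"
    unfolding u_def x_def g by (auto simp: fun_eq_iff colz_Lop)
  have gb0: "colz N gb 0 = (\<lambda>i. u i + b * y i)"
    unfolding u_def y_def gb' by (auto simp: fun_eq_iff colz_Lop)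
  have Dd: "(\<lambda>i. a * x i + (- b) * y i) = (\<lambda>i. (a - b) * D i + 0 * D i)"
    unfolding x_def y_def D_def ga gb by (auto simp: fun_eq_iff colz_Lop algebra_simps)
  have lin1: "Psi (\<lambda>i. c1 * x1 i + c2 * x2 i) z = c1 * Psi x1 z + c2 * Psi x2 z" for c1 c2 x1 x2 z
    unfolding Psi_def by (rule Psi_lin1[OF N2])
  have add2: "Psi z (\<lambda>i. y1 i + c * y2 i) = Psi z y1 + c * Psi z y2" for c y1 y2 z
    unfolding Psi_def by (rule Psi_add2[OF N2])
  have alt: "Psi z z = 0" for z unfolding Psi_def by (rule Psi_alt[OF N2])
  have anti: "Psi z1 z2 = - Psi z2 z1" for z1 z2 unfolding Psi_def by (rule Psi_anti[OF N2])
  have pl: "Psi w u * Psi x y - Psi w x * Psi u y + Psi w y * Psi u x = 0"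
    unfolding Psi_def by (rule Psi_pluecker[OF N2])
  have key: "(a - b) * Psi D (\<lambda>i. u i + b * y i) = a * (Psi x u + b * Psi x y) - b * Psi y u"
  proof -
    have "(a - b) * Psi D (\<lambda>i. u i + b * y i) = Psi (\<lambda>i. (a - b) * D i + 0 * D i) (\<lambda>i. u i + b * y i)"
      using lin1[of "a - b" D 0 D "(\<lambda>i. u i + b * y i)"] by simp
    also have "\<dots> = a * Psi x (\<lambda>i. u i + b * y i) - b * Psi y (\<lambda>i. u i + b * y i)"
      unfolding Dd[symmetric] lin1 by simp
    also have "\<dots> = a * (Psi x u + b * Psi x y) - b * Psi y u"
      unfolding add2 alt by simp
    finally show ?thesis .
  qed
  have "(a - b) * tau (n - 1) d * tau n g = (-1)^(Suc m) * Psi w u * ((a - b) * Psi D (\<lambda>i. u i + b * y i))"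
    using s_d t_g gb0 unfolding Nm N_def D_def by simp
  also have "\<dots> = (-1)^(Suc m) * Psi w u * (a * (Psi x u + b * Psi x y) - b * Psi y u)" unfolding key ..
  also have "\<dots> = a * Psi x u * ((-1)^(Suc m) * (Psi w u + b * Psi w y)) - b * Psi y u * ((-1)^(Suc m) * (Psi w u + a * Psi w x))"
    by (rule alg_C) (use pl anti[of u y] anti[of u x] in simp)
  also have "\<dots> = a * tau (n - 1) ga * tau n gb - b * tau (n - 1) gb * tau n ga"
    using s_gb s_ga t_ga t_gb ga0 gb0 unfolding Nm N_def u_def x_def y_def by (simp add: add2)
  finally show ?thesis .
qed



definition conv :: "(nat \<Rightarrow> complex) \<Rightarrow> (nat \<Rightarrow> complex) \<Rightarrow> nat \<Rightarrow> complex" where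
  "conv f g n = (\<Sum>i\<le>n. f i * g (n - i))"

definition Lnat :: "complex \<Rightarrow> (nat \<Rightarrow> complex) \<Rightarrow> nat \<Rightarrow> complex" where
  "Lnat a f n = (if n = 0 then f 0 else f n - a * f (n - 1))"

definition Sc :: "complex \<Rightarrow> (nat \<Rightarrow> complex) \<Rightarrow> nat \<Rightarrow> complex" where
  "Sc q f n = q ^ n * f n"

definition uu :: "complex \<Rightarrow> complex \<Rightarrow> nat \<Rightarrow> complex" where
  "uu q y a = ((1 - q) * y) ^ a / qpoch q a"

definition ee :: "complex \<Rightarrow> nat \<Rightarrow> complex" where
  "ee q c = (1 - q) ^ c * q ^ (c * (c - 1) div 2) / qpoch q c"

definition ofnat :: "(nat \<Rightarrow> complex) \<Rightarrow> int \<Rightarrow> complex" where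
  "ofnat f k = (if k < 0 then 0 else f (nat k))"

definition Psq :: "complex \<Rightarrow> complex \<Rightarrow> complex \<Rightarrow> int \<Rightarrow> complex" where
  "Psq q y z k = pq q k y z"

lemma conv_comm: "conv f g = conv g f"
proof (rule ext)
  fix n
  have "conv f g n = (\<Sum>i=0..n. f i * g (n - i))" unfolding conv_def by (simp add: atMost_atLeast0)
  also have "\<dots> = (\<Sum>i=0..n. f (n + 0 - i) * g (n - (n + 0 - i)))" by (rule sum.atLeastAtMost_rev)
  also have "\<dots> = (\<Sum>i=0..n. g i * f (n - i))" by (rule sum.cong) auto
  finally show "conv f g n = conv g f n" unfolding conv_def by (simp add: atMost_atLeast0)
qed

lemma conv_Lnat: "conv (Lnat a f) g = Lnat a (conv f g)"
proof (rule ext)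
  fix n
  show "conv (Lnat a f) g n = Lnat a (conv f g) n"
  proof (cases n)
    case 0 then show ?thesis by (simp add: conv_def Lnat_def)
  next
    case (Suc m)
    have "conv (Lnat a f) g (Suc m) = Lnat a f 0 * g (Suc m) + (\<Sum>i\<le>m. Lnat a f (Suc i) * g (m - i))"
      unfolding conv_def by (subst sum.atMost_Suc_shift) simp
    also have "\<dots> = f 0 * g (Suc m) + (\<Sum>i\<le>m. f (Suc i) * g (m - i)) - a * (\<Sum>i\<le>m. f i * g (m - i))"
      by (simp add: Lnat_def algebra_simps sum_subtractf sum_distrib_left)
    also have "f 0 * g (Suc m) + (\<Sum>i\<le>m. f (Suc i) * g (m - i)) = conv f g (Suc m)"
      unfolding conv_def by (subst sum.atMost_Suc_shift) simp
    finally show ?thesis using Suc by (simp add: Lnat_def conv_def)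
  qed
qed

lemma conv_Lnat2: "conv f (Lnat a g) = Lnat a (conv f g)"
  by (metis conv_Lnat conv_comm)

lemma conv_Sc: "conv (Sc q f) (Sc q g) = Sc q (conv f g)"
  unfolding conv_def Sc_def
  by (auto simp: fun_eq_iff sum_distrib_left mult_ac power_add[symmetric] intro!: sum.cong)

lemma qpoch_Suc: "qpoch q (Suc m) = qpoch q m * (1 - q ^ Suc m)"
  unfolding qpoch_def by simp

lemma qpoch_nz:
  assumes "\<forall>n::nat. n > 0 \<longrightarrow> q ^ n \<noteq> 1"
  shows "qpoch q m \<noteq> 0"
  unfolding qpoch_def using assms by (auto simp: prod_zero_iff)

lemma uu_L:
  assumes q0: "q \<noteq> 0" and qn: "\<forall>n::nat. n > 0 \<longrightarrow> q ^ n \<noteq> 1"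
  shows "uu q y = Lnat ((1 - q) * y / q) (uu q (y / q))"
proof (rule ext)
  fix a show "uu q y a = Lnat ((1 - q) * y / q) (uu q (y / q)) a"
  proof (cases a)
    case 0 then show ?thesis by (simp add: uu_def Lnat_def qpoch_def)
  next
    case (Suc m)
    have P: "qpoch q m \<noteq> 0" by (rule qpoch_nz[OF qn])
    have Q: "1 - q ^ Suc m \<noteq> 0" using qn by auto
    have "Lnat ((1 - q) * y / q) (uu q (y / q)) (Suc m)
       = ((1 - q) * y / q) ^ Suc m / (qpoch q m * (1 - q ^ Suc m)) - ((1 - q) * y / q) * (((1 - q) * y / q) ^ m / qpoch q m)"
      by (simp add: Lnat_def uu_def qpoch_Suc mult.assoc)
    also have "\<dots> = ((1 - q) * y / q) ^ Suc m * q ^ Suc m / (qpoch q m * (1 - q ^ Suc m))"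
    proof -
      have g: "A / (P' * Q') - A / P' = A * (1 - Q') / (P' * Q')" if "P' \<noteq> 0" "Q' \<noteq> 0" for A P' Q' :: complex
        using that by (simp add: field_simps)
      have "((1 - q) * y / q) * (((1 - q) * y / q) ^ m / qpoch q m) = ((1 - q) * y / q) ^ Suc m / qpoch q m"
        by simp
      then show ?thesis using g[OF P Q, of "((1 - q) * y / q) ^ Suc m"] by simp
    qed
    also have "\<dots> = uu q y (Suc m)"
      using q0 by (simp add: uu_def qpoch_Suc power_divide power_mult_distrib)
    finally show ?thesis using Suc by simp
  qed
qed

lemma uu_scale: "uu q (q * y) = Sc q (uu q y)"
  by (auto simp: fun_eq_iff uu_def Sc_def power_mult_distrib)

lemma tri_div: "Suc m * m div 2 = m + m * (m - 1) div 2"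
proof (cases m)
  case 0 then show ?thesis by simp
next
  case (Suc k)
  have "Suc m * m = 2 * m + m * (m - 1)" using Suc by (simp add: algebra_simps)
  then show ?thesis by simp
qed

lemma ee_L:
  assumes q0: "q \<noteq> 0" and qn: "\<forall>n::nat. n > 0 \<longrightarrow> q ^ n \<noteq> 1"
  shows "ee q = Lnat (- (1 - q)) (Sc q (ee q))"
proof (rule ext)
  fix c show "ee q c = Lnat (- (1 - q)) (Sc q (ee q)) c"
  proof (cases c)
    case 0 then show ?thesis by (simp add: ee_def Lnat_def Sc_def)
  next
    case (Suc m)
    have P: "qpoch q m \<noteq> 0" by (rule qpoch_nz[OF qn])
    have Q: "1 - q ^ Suc m \<noteq> 0" using qn by auto
    have e: "q ^ (Suc m * m div 2) = q ^ m * q ^ (m * (m - 1) div 2)"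
      by (subst tri_div) (simp only: power_add)
    have "Lnat (- (1 - q)) (Sc q (ee q)) (Suc m)
        = q ^ Suc m * ((1 - q) ^ Suc m * q ^ (Suc m * m div 2) / (qpoch q m * (1 - q ^ Suc m)))
          + (1 - q) * (q ^ m * ((1 - q) ^ m * q ^ (m * (m - 1) div 2) / qpoch q m))"
      by (simp add: Lnat_def Sc_def ee_def qpoch_Suc) (simp add: minus_divide_left algebra_simps)
    also have "\<dots> = (1 - q) ^ Suc m * q ^ (Suc m * m div 2) / (qpoch q m * (1 - q ^ Suc m))"
      using P Q unfolding e by (simp add: field_simps)
    also have "\<dots> = ee q (Suc m)" by (simp add: ee_def qpoch_Suc)
    finally show ?thesis using Suc by simp
  qed
qed

lemma pq_conv: "pq q (int n) y z = conv (uu q y) (conv (uu q z) (ee q)) n"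
proof -
  have "pq q (int n) y z = (\<Sum>a\<le>n. \<Sum>b\<le>n - a. (1 - q) ^ n * (y ^ a * z ^ b * q ^ ((n - a - b) * (n - a - b - 1) div 2)
          / (qpoch q a * qpoch q b * qpoch q (n - a - b))))"
    unfolding pq_def by (simp add: Let_def sum_distrib_left)
  also have "\<dots> = conv (uu q y) (conv (uu q z) (ee q)) n"
    unfolding conv_def sum_distrib_left
  proof (rule sum.cong[OF refl], rule sum.cong[OF refl])
    fix a b assume a: "a \<in> {..n}" and b: "b \<in> {..n - a}"
    have nn: "n = a + b + (n - a - b)" using a b by auto
    have "(1 - q) ^ n = (1 - q) ^ a * (1 - q) ^ b * (1 - q) ^ (n - a - b)"
      by (subst nn) (simp add: power_add)
    then show "(1 - q) ^ n * (y ^ a * z ^ b * q ^ ((n - a - b) * (n - a - b - 1) div 2) /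
         (qpoch q a * qpoch q b * qpoch q (n - a - b))) =
         uu q y a * (uu q z b * ee q (n - a - b))"
      by (simp add: uu_def ee_def power_mult_distrib mult_ac)
  qed
  finally show ?thesis .
qed

lemma Psq_ofnat: "Psq q y z = ofnat (conv (uu q y) (conv (uu q z) (ee q)))"
  by (auto simp: fun_eq_iff Psq_def ofnat_def pq_conv[symmetric] pq_def)

lemma Lop_ofnat: "Lop a (ofnat f) = ofnat (Lnat a f)"
  by (auto simp: fun_eq_iff Lop_def ofnat_def Lnat_def nat_diff_distrib)

lemma Psq_Cy:
  assumes "q \<noteq> 0" "\<forall>n::nat. n > 0 \<longrightarrow> q ^ n \<noteq> 1"
  shows "Psq q y z = Lop ((1 - q) * y / q) (Psq q (y / q) z)"
  unfolding Psq_ofnat Lop_ofnat uu_L[OF assms, of y] conv_Lnat ..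

lemma Psq_Cz:
  assumes "q \<noteq> 0" "\<forall>n::nat. n > 0 \<longrightarrow> q ^ n \<noteq> 1"
  shows "Psq q y z = Lop ((1 - q) * z / q) (Psq q y (z / q))"
  unfolding Psq_ofnat Lop_ofnat uu_L[OF assms, of z] conv_Lnat conv_Lnat2 ..

definition Sq :: "complex \<Rightarrow> (int \<Rightarrow> complex) \<Rightarrow> int \<Rightarrow> complex" where
  "Sq q s k = q powi k * s k"

lemma Sq_ofnat: "q \<noteq> 0 \<Longrightarrow> ofnat (Sc q f) = Sq q (ofnat f)"
  by (auto simp: fun_eq_iff ofnat_def Sc_def Sq_def power_int_def)

lemma Psq_Cs:
  assumes q0: "q \<noteq> 0" and qn: "\<forall>n::nat. n > 0 \<longrightarrow> q ^ n \<noteq> 1"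
  shows "Psq q (q * y) (q * z) = Lop (- (1 - q)) (Sq q (Psq q y z))"
proof -
  have "Psq q (q * y) (q * z) = ofnat (conv (Sc q (uu q y)) (conv (Sc q (uu q z)) (Lnat (- (1 - q)) (Sc q (ee q)))))"
    unfolding Psq_ofnat uu_scale ee_L[OF q0 qn, symmetric] ..
  also have "\<dots> = ofnat (Lnat (- (1 - q)) (Sc q (conv (uu q y) (conv (uu q z) (ee q)))))"
    unfolding conv_Lnat2 conv_Sc ..
  also have "\<dots> = Lop (- (1 - q)) (Sq q (Psq q y z))"
    unfolding Lop_ofnat[symmetric] Sq_ofnat[OF q0] Psq_ofnat ..
  finally show ?thesis .
qed



lemma prod_powi:
  fixes q :: complex
  assumes "q \<noteq> 0" "finite S"
  shows "(\<Prod>i\<in>S. q powi e i) = q powi (\<Sum>i\<in>S. e i)"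
  using assms(2)
proof (induction S rule: finite_induct)
  case (insert x F)
  have "q powi (e x + sum e F) = q powi e x * q powi sum e F" by (rule power_int_add) (simp add: assms(1))
  then show ?case using insert by simp
qed simp

lemma sum_int_lt: "2 * (\<Sum>i<n. int i) + int n = int n * int n"
  by (induction n) (auto simp: algebra_simps)

lemma sum_tri: "(\<Sum>i\<in>{0..<n}. int n - 2 * int i + int (p i)) = int (n * Suc n div 2)"
  if "p permutes {0..<n}"
proof -
  have bij: "bij_betw p {0..<n} {0..<n}" by (rule permutes_imp_bij[OF that])
  have "(\<Sum>i\<in>{0..<n}. int (p i)) = (\<Sum>i\<in>{0..<n}. int i)"
    using sum.reindex_bij_betw[OF bij, of int] by simp
  then have "(\<Sum>i\<in>{0..<n}. int n - 2 * int i + int (p i)) = (\<Sum>i\<in>{0..<n}. int n - 2 * int i) + (\<Sum>i\<in>{0..<n}. int i)"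
    by (simp add: sum.distrib)
  also have "\<dots> = int n * int n - (\<Sum>i<n. int i)"
    by (simp add: sum_subtractf sum_distrib_left[symmetric] atLeast0LessThan)
  finally have E: "(\<Sum>i\<in>{0..<n}. int n - 2 * int i + int (p i)) = int n * int n - (\<Sum>i<n. int i)" .
  have ev: "n * Suc n div 2 * 2 = n * Suc n" by simp
  have "int (n * Suc n div 2) * 2 = int (n * Suc n div 2 * 2)" by (simp only: of_nat_mult of_nat_numeral)
  also have "\<dots> = int (n * Suc n)" by (simp only: ev)
  also have "\<dots> = int n * int n + int n" by (simp add: algebra_simps)
  finally have "int (n * Suc n div 2) * 2 = int n * int n + int n" .
  then show ?thesis unfolding E using sum_int_lt[of n] by linarith
qed

lemma tau_Sq:
  assumes q0: "q \<noteq> 0"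
  shows "tau n (Sq q s) = q ^ (n * Suc n div 2) * tau n s"
proof -
  have d: "tau n t = (\<Sum>p\<in>{p. p permutes {0..<n}}. signof p * (\<Prod>i=0..<n. t (int n - 2 * int i + int (p i))))" for t
    unfolding tau_def Dt_def colz_def
    by (subst det_def'[of _ n]) (auto intro!: sum.cong prod.cong simp: permutes_nat_less)
  have "tau n (Sq q s) = (\<Sum>p\<in>{p. p permutes {0..<n}}. signof p * (q ^ (n * Suc n div 2) * (\<Prod>i=0..<n. s (int n - 2 * int i + int (p i)))))"
    unfolding d
  proof (rule sum.cong[OF refl])
    fix p assume p: "p \<in> {p. p permutes {0..<n}}"
    have "(\<Prod>i=0..<n. Sq q s (int n - 2 * int i + int (p i)))
       = (\<Prod>i=0..<n. q powi (int n - 2 * int i + int (p i))) * (\<Prod>i=0..<n. s (int n - 2 * int i + int (p i)))"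
      unfolding Sq_def by (rule prod.distrib)
    also have "(\<Prod>i=0..<n. q powi (int n - 2 * int i + int (p i))) = q powi int (n * Suc n div 2)"
      using prod_powi[OF q0, of "{0..<n}"] sum_tri[of p n] p by simp
    finally show "signof p * (\<Prod>i=0..<n. Sq q s (int n - 2 * int i + int (p i))) =
        signof p * (q ^ (n * Suc n div 2) * (\<Prod>i=0..<n. s (int n - 2 * int i + int (p i))))"
      by simp
  qed
  also have "\<dots> = q ^ (n * Suc n div 2) * tau n s"
    unfolding d by (simp add: sum_distrib_left mult_ac)
  finally show ?thesis .
qed

lemma Lop_Sq: "q \<noteq> 0 \<Longrightarrow> Lop c (Sq q s) = Sq q (Lop (c / q) s)"
  by (auto simp: fun_eq_iff Lop_def Sq_def power_int_diff field_simps)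

lemma nice_Psq: "nice (Psq q y z)"
  by (simp add: nice_def Psq_def pq_def qpoch_def)

lemma phi_nat_tau: "phi_nat q n y z = tau n (Psq q y z)"
  by (simp add: phi_nat_def tau_def Dt_def colz_def Psq_def)



lemma cont_pq: "continuous_on UNIV g \<Longrightarrow> continuous_on UNIV (\<lambda>z. pq q k y (g z))"
  unfolding pq_def Let_def divide_inverse
  by (cases "k < 0") (auto intro!: continuous_intros)

lemma cont_phi: "continuous_on UNIV g \<Longrightarrow> continuous_on UNIV (\<lambda>z. phi_nat q n y (g z))"
proof -
  assume g: "continuous_on UNIV g"
  have "phi_nat q n y (g z) = (if n = 0 then 1 else (\<Sum>p\<in>{p. p permutes {0..<n}}. signof p *
      (\<Prod>i=0..<n. pq q (int n - 2 * int i + int (p i)) y (g z))))" for z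
    unfolding phi_nat_def
    by (subst det_def'[of _ n]) (auto intro!: sum.cong prod.cong simp: permutes_nat_less)
  moreover have "continuous_on UNIV (\<lambda>z. (if n = 0 then 1 else (\<Sum>p\<in>{p. p permutes {0..<n}}. signof p *
      (\<Prod>i=0..<n. pq q (int n - 2 * int i + int (p i)) y (g z)))))"
    by (cases "n = 0") (auto intro!: continuous_intros cont_pq[OF g])
  ultimately show ?thesis by simp
qed

lemma zero_by_cont:
  fixes F :: "complex \<Rightarrow> complex"
  assumes "continuous_on UNIV F" "\<And>w. w \<noteq> y \<Longrightarrow> F w = 0"
  shows "F y = 0"
proof -
  have "(F \<longlongrightarrow> F y) (at y)"
    using assms(1) by (simp add: continuous_on_eq_continuous_at isCont_def)
  moreover have "(F \<longlongrightarrow> 0) (at y)"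
  proof (rule Lim_transform_eventually)
    show "((\<lambda>w. 0) \<longlongrightarrow> 0) (at y)" by simp
    show "\<forall>\<^sub>F w in at y. 0 = F w" using assms(2) by (auto simp: eventually_at_filter)
  qed
  ultimately show ?thesis by (rule LIM_unique)
qed

lemma tri_Suc: "Suc m * Suc (Suc m) div 2 = Suc m + m * Suc m div 2"
proof -
  have "Suc m * Suc (Suc m) = 2 * Suc m + m * Suc m" by (simp add: algebra_simps)
  then show ?thesis by simp
qed

lemma Q_Suc: "(q::complex) ^ (Suc m * Suc (Suc m) div 2) = q ^ Suc m * q ^ (m * Suc m div 2)"
  by (subst tri_Suc) (simp only: power_add)

lemma tau_scale:
  assumes q0: "q \<noteq> 0" and qn: "\<forall>n::nat. n > 0 \<longrightarrow> q ^ n \<noteq> 1"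
  shows "tau k (Psq q (q * y) (q * z)) = q ^ (k * Suc k div 2) * tau k (Lop (- ((1 - q) / q)) (Psq q y z))"
  unfolding Psq_Cs[OF q0 qn] Lop_Sq[OF q0] tau_Sq[OF q0] by (simp add: minus_divide_left)

lemma E12nat:
  assumes q0: "q \<noteq> 0" and qn: "\<forall>n::nat. n > 0 \<longrightarrow> q ^ n \<noteq> 1" and n: "n = Suc m"
  shows "tau m (Psq q (y/q) z) * tau n (Psq q y z) + z * q^n * tau m (Psq q y z) * tau n (Psq q (y/q) z)
       = (1 + z) * tau m (Psq q (y/q) (z/q)) * tau n (Psq q y (q*z))"
    and "z * tau m (Psq q (y/q) z) * tau n (Psq q y z) + q^n * tau m (Psq q y z) * tau n (Psq q (y/q) z)
       = q^n * (1 + z) * tau n (Psq q (y/q) (z/q)) * tau m (Psq q y (q*z))"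
proof -
  define dl where "dl = (1 - q) / q"
  have q1: "q \<noteq> 1" using qn[rule_format, of 1] by auto
  have dl0: "dl \<noteq> 0" unfolding dl_def using q0 q1 by simp
  define V where "V = Psq q (y/q) (z/q)"
  define ga where "ga = Lop (z * dl) V"
  define gb where "gb = Lop (- dl) V"
  define g where "g = Lop (- dl) ga"
  have ga_eq: "ga = Psq q (y/q) z"
    unfolding ga_def V_def dl_def using Psq_Cz[OF q0 qn, of "y/q" z] by (simp add: mult.commute)
  have nV: "nice V" unfolding V_def by (rule nice_Psq)
  have s1: "tau k (Psq q y z) = q ^ (k * Suc k div 2) * tau k gb" for k
    using tau_scale[OF q0 qn, of k "y/q" "z/q"] q0 unfolding gb_def V_def dl_def by simp
  have s2: "tau k (Psq q y (q*z)) = q ^ (k * Suc k div 2) * tau k g" for k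
    using tau_scale[OF q0 qn, of k "y/q" z] q0 unfolding g_def ga_eq dl_def by simp
  have C: "(- dl - z * dl) * tau m V * tau n g = (- dl) * tau m ga * tau n gb - (z * dl) * tau m gb * tau n ga"
    using tau_C[OF ga_def gb_def g_def nV, of n] n by simp
  have R: "(- dl - z * dl) * tau m g * tau n V = (- dl) * tau m gb * tau n ga - (z * dl) * tau m ga * tau n gb"
    using tau_R[OF ga_def gb_def g_def, of n] n by simp
  have C': "(1 + z) * (tau m V * tau n g) = tau m ga * tau n gb + z * (tau m gb * tau n ga)"
  proof -
    have "dl * ((1 + z) * (tau m V * tau n g) - (tau m ga * tau n gb + z * (tau m gb * tau n ga))) = 0"
      using C by (simp add: algebra_simps)
    then show ?thesis using dl0 by simp
  qed
  have R': "(1 + z) * (tau m g * tau n V) = tau m gb * tau n ga + z * (tau m ga * tau n gb)"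
  proof -
    have "dl * ((1 + z) * (tau m g * tau n V) - (tau m gb * tau n ga + z * (tau m ga * tau n gb))) = 0"
      using R by (simp add: algebra_simps)
    then show ?thesis using dl0 by simp
  qed
  have Q: "q ^ (n * Suc n div 2) = q ^ n * q ^ (m * Suc m div 2)" unfolding n by (rule Q_Suc)
  show "tau m (Psq q (y/q) z) * tau n (Psq q y z) + z * q^n * tau m (Psq q y z) * tau n (Psq q (y/q) z)
       = (1 + z) * tau m (Psq q (y/q) (z/q)) * tau n (Psq q y (q*z))"
    unfolding s1 s2 ga_eq[symmetric] V_def[symmetric] Q
    using arg_cong[OF C', of "\<lambda>x. x * (q ^ n * q ^ (m * Suc m div 2))"] by (simp add: algebra_simps)
  show "z * tau m (Psq q (y/q) z) * tau n (Psq q y z) + q^n * tau m (Psq q y z) * tau n (Psq q (y/q) z)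
       = q^n * (1 + z) * tau n (Psq q (y/q) (z/q)) * tau m (Psq q y (q*z))"
    unfolding s1 s2 ga_eq[symmetric] V_def[symmetric] Q
    using arg_cong[OF R', of "\<lambda>x. x * (q ^ n * q ^ (m * Suc m div 2))"] by (simp add: algebra_simps)
qed

lemma E34nat_ne:
  assumes q0: "q \<noteq> 0" and qn: "\<forall>n::nat. n > 0 \<longrightarrow> q ^ n \<noteq> 1" and n: "n = Suc m" and yz: "y \<noteq> z"
  shows "y * tau m (Psq q y z) * tau n (Psq q (y/q) (z/q)) + z * tau m (Psq q (y/q) (z/q)) * tau n (Psq q y z)
       = (y + z) * tau m (Psq q y (z/q)) * tau n (Psq q (y/q) z)"
    and "z * tau m (Psq q y z) * tau n (Psq q (y/q) (z/q)) + y * tau m (Psq q (y/q) (z/q)) * tau n (Psq q y z)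
       = (y + z) * tau n (Psq q y (z/q)) * tau m (Psq q (y/q) z)"
proof -
  define dl where "dl = (1 - q) / q"
  have q1: "q \<noteq> 1" using qn[rule_format, of 1] by auto
  have dl0: "dl \<noteq> 0" unfolding dl_def using q0 q1 by simp
  define V where "V = Psq q (y/q) (z/q)"
  define ga where "ga = Lop (z * dl) V"
  define gb where "gb = Lop (y * dl) V"
  define g where "g = Lop (y * dl) ga"
  have ga_eq: "ga = Psq q (y/q) z"
    unfolding ga_def V_def dl_def using Psq_Cz[OF q0 qn, of "y/q" z] by (simp add: mult.commute)
  have gb_eq: "gb = Psq q y (z/q)"
    unfolding gb_def V_def dl_def using Psq_Cy[OF q0 qn, of y "z/q"] by (simp add: mult.commute)
  have g_eq: "g = Psq q y z"
    unfolding g_def ga_eq dl_def using Psq_Cy[OF q0 qn, of y z] by (simp add: mult.commute)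
  have nV: "nice V" unfolding V_def by (rule nice_Psq)
  have C: "(y * dl - z * dl) * tau m V * tau n g = (y * dl) * tau m ga * tau n gb - (z * dl) * tau m gb * tau n ga"
    using tau_C[OF ga_def gb_def g_def nV, of n] n by simp
  have R: "(y * dl - z * dl) * tau m g * tau n V = (y * dl) * tau m gb * tau n ga - (z * dl) * tau m ga * tau n gb"
    using tau_R[OF ga_def gb_def g_def, of n] n by simp
  define X where "X = tau m g * tau n V"
  define Y where "Y = tau m V * tau n g"
  define W where "W = tau m gb * tau n ga"
  define W' where "W' = tau m ga * tau n gb"
  have R0: "(y - z) * X = y * W - z * W'"
  proof -
    have "dl * ((y - z) * X - (y * W - z * W')) = 0" using R unfolding X_def W_def W'_def by (simp add: algebra_simps)
    then show ?thesis using dl0 by simp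
  qed
  have C0: "(y - z) * Y = y * W' - z * W"
  proof -
    have "dl * ((y - z) * Y - (y * W' - z * W)) = 0" using C unfolding Y_def W_def W'_def by (simp add: algebra_simps)
    then show ?thesis using dl0 by simp
  qed
  have yz0: "y - z \<noteq> 0" using yz by simp
  have E3: "y * X + z * Y = (y + z) * W"
  proof -
    have "(y - z) * (y * X + z * Y - (y + z) * W) = y * ((y - z) * X) + z * ((y - z) * Y) - (y - z) * (y + z) * W"
      by (simp add: algebra_simps)
    also have "\<dots> = 0" unfolding R0 C0 by (simp add: algebra_simps)
    finally show ?thesis using yz0 by simp
  qed
  have E4: "z * X + y * Y = (y + z) * W'"
  proof -
    have "(y - z) * (z * X + y * Y - (y + z) * W') = z * ((y - z) * X) + y * ((y - z) * Y) - (y - z) * (y + z) * W'"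
      by (simp add: algebra_simps)
    also have "\<dots> = 0" unfolding R0 C0 by (simp add: algebra_simps)
    finally show ?thesis using yz0 by simp
  qed
  show "y * tau m (Psq q y z) * tau n (Psq q (y/q) (z/q)) + z * tau m (Psq q (y/q) (z/q)) * tau n (Psq q y z)
       = (y + z) * tau m (Psq q y (z/q)) * tau n (Psq q (y/q) z)"
    using E3 unfolding X_def Y_def W_def g_eq gb_eq ga_eq V_def by (simp add: mult.assoc)
  show "z * tau m (Psq q y z) * tau n (Psq q (y/q) (z/q)) + y * tau m (Psq q (y/q) (z/q)) * tau n (Psq q y z)
       = (y + z) * tau n (Psq q y (z/q)) * tau m (Psq q (y/q) z)"
    using E4 unfolding X_def Y_def W'_def g_eq gb_eq ga_eq V_def by (simp add: mult_ac)
qed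

lemma E34nat:
  assumes q0: "q \<noteq> 0" and qn: "\<forall>n::nat. n > 0 \<longrightarrow> q ^ n \<noteq> 1" and n: "n = Suc m"
  shows "y * phi_nat q m y z * phi_nat q n (y/q) (z/q) + z * phi_nat q m (y/q) (z/q) * phi_nat q n y z
       = (y + z) * phi_nat q m y (z/q) * phi_nat q n (y/q) z"
    and "z * phi_nat q m y z * phi_nat q n (y/q) (z/q) + y * phi_nat q m (y/q) (z/q) * phi_nat q n y z
       = (y + z) * phi_nat q n y (z/q) * phi_nat q m (y/q) z"
proof -
  define F where "F = (\<lambda>w. y * phi_nat q m y w * phi_nat q n (y/q) (w/q) + w * phi_nat q m (y/q) (w/q) * phi_nat q n y w
       - (y + w) * phi_nat q m y (w/q) * phi_nat q n (y/q) w)"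
  define G where "G = (\<lambda>w. w * phi_nat q m y w * phi_nat q n (y/q) (w/q) + y * phi_nat q m (y/q) (w/q) * phi_nat q n y w
       - (y + w) * phi_nat q n y (w/q) * phi_nat q m (y/q) w)"
  have ci: "continuous_on UNIV (\<lambda>w::complex. w)" by (intro continuous_intros)
  have cd: "continuous_on UNIV (\<lambda>w::complex. w / q)" using q0 by (intro continuous_intros) auto
  have cF: "continuous_on UNIV F" unfolding F_def
    by (intro continuous_intros cont_phi[OF ci, simplified] cont_phi[OF cd])
  have cG: "continuous_on UNIV G" unfolding G_def
    by (intro continuous_intros cont_phi[OF ci, simplified] cont_phi[OF cd])
  have F0: "F w = 0" if "w \<noteq> y" for w
    using E34nat_ne(1)[OF q0 qn n, of y w] that unfolding F_def phi_nat_tau by simp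
  have G0: "G w = 0" if "w \<noteq> y" for w
    using E34nat_ne(2)[OF q0 qn n, of y w] that unfolding G_def phi_nat_tau by simp
  have "F z = 0"
  proof (cases "z = y")
    case True
    then show ?thesis using zero_by_cont[OF cF F0] by simp
  qed (rule F0)
  then show "y * phi_nat q m y z * phi_nat q n (y/q) (z/q) + z * phi_nat q m (y/q) (z/q) * phi_nat q n y z
       = (y + z) * phi_nat q m y (z/q) * phi_nat q n (y/q) z" unfolding F_def by simp
  have "G z = 0"
  proof (cases "z = y")
    case True
    then show ?thesis using zero_by_cont[OF cG G0] by simp
  qed (rule G0)
  then show "z * phi_nat q m y z * phi_nat q n (y/q) (z/q) + y * phi_nat q m (y/q) (z/q) * phi_nat q n y z
       = (y + z) * phi_nat q n y (z/q) * phi_nat q m (y/q) z" unfolding G_def by simp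
qed



lemma E12nat_phi:
  assumes q0: "q \<noteq> 0" and qn: "\<forall>n::nat. n > 0 \<longrightarrow> q ^ n \<noteq> 1"
  shows "phi_nat q m (y/q) z * phi_nat q (Suc m) y z + z * q^Suc m * phi_nat q m y z * phi_nat q (Suc m) (y/q) z
       = (1 + z) * phi_nat q m (y/q) (z/q) * phi_nat q (Suc m) y (q*z)"
    and "z * phi_nat q m (y/q) z * phi_nat q (Suc m) y z + q^Suc m * phi_nat q m y z * phi_nat q (Suc m) (y/q) z
       = q^Suc m * (1 + z) * phi_nat q (Suc m) (y/q) (z/q) * phi_nat q m y (q*z)"
  using E12nat[OF q0 qn refl, where m=m and y=y and z=z] unfolding phi_nat_tau by auto

lemma phi_pos: "N \<ge> 0 \<Longrightarrow> phi q N y z = phi_nat q (nat N) y z"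
  unfolding phi_def by simp

lemma phi_neg: "N < 0 \<Longrightarrow> phi q N y z = (-1) ^ nat (N * (N + 1) div 2) * phi_nat q (nat (- N - 1)) y z"
  unfolding phi_def by simp

lemma gen1:
  fixes Q z u1 u2 u3 u4 u5 u6 s1 s2 :: complex
  assumes "Q \<noteq> 0" "z*u1*u2 + Q*u3*u4 = Q*(1+z)*u5*u6"
  shows "s2*u4*(s1*u3) + z*(1/Q)*(s2*u2)*(s1*u1) = (1+z)*(s2*u5)*(s1*u6)"
proof -
  have "s2*u4*(s1*u3) + z*(1/Q)*(s2*u2)*(s1*u1) = s1*s2*(z*u1*u2 + Q*u3*u4)/Q"
    using assms(1) by (simp add: field_simps)
  also have "\<dots> = (1+z)*(s2*u5)*(s1*u6)" unfolding assms(2) using assms(1) by (simp add: field_simps)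
  finally show ?thesis .
qed

lemma gen2:
  fixes Q z u1 u2 u3 u4 v5 v6 s1 s2 :: complex
  assumes "Q \<noteq> 0" "u1*u2 + z*Q*u3*u4 = (1+z)*v5*v6"
  shows "z*(s2*u4)*(s1*u3) + (1/Q)*(s2*u2)*(s1*u1) = (1/Q)*(1+z)*(s1*v5)*(s2*v6)"
proof -
  have "z*(s2*u4)*(s1*u3) + (1/Q)*(s2*u2)*(s1*u1) = s1*s2*(u1*u2 + z*Q*u3*u4)/Q"
    using assms(1) by (simp add: field_simps)
  also have "\<dots> = (1/Q)*(1+z)*(s1*v5)*(s2*v6)" unfolding assms(2) using assms(1) by (simp add: field_simps)
  finally show ?thesis .
qed

lemma gen3:
  fixes y z w1 w2 w3 w4 w5 w6 s1 s2 :: complex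
  assumes "z*w1*w2 + y*w3*w4 = (y+z)*w5*w6"
  shows "y*(s2*w4)*(s1*w3) + z*(s2*w2)*(s1*w1) = (y+z)*(s2*w5)*(s1*w6)"
proof -
  have "y*(s2*w4)*(s1*w3) + z*(s2*w2)*(s1*w1) = s1*s2*(z*w1*w2 + y*w3*w4)" by (simp add: algebra_simps)
  also have "\<dots> = (y+z)*(s2*w5)*(s1*w6)" unfolding assms by (simp add: algebra_simps)
  finally show ?thesis .
qed

lemma gen4:
  fixes y z w1 w2 w3 w4 w5 w6 s1 s2 :: complex
  assumes "y*w1*w2 + z*w3*w4 = (y+z)*w5*w6"
  shows "z*(s2*w4)*(s1*w3) + y*(s2*w2)*(s1*w1) = (y+z)*(s1*w5)*(s2*w6)"
proof -
  have "z*(s2*w4)*(s1*w3) + y*(s2*w2)*(s1*w1) = s1*s2*(y*w1*w2 + z*w3*w4)" by (simp add: algebra_simps)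
  also have "\<dots> = (y+z)*(s1*w5)*(s2*w6)" unfolding assms by (simp add: algebra_simps)
  finally show ?thesis .
qed

lemma EZ:
  assumes q0: "q \<noteq> 0" and qn: "\<forall>n::nat. n > 0 \<longrightarrow> q ^ n \<noteq> 1"
  shows "phi q (N-1) (y/q) z * phi q N y z + z * q powi N * phi q (N-1) y z * phi q N (y/q) z
       = (1 + z) * phi q (N-1) (y/q) (z/q) * phi q N y (q*z)"  (is ?E1)
    and "z * phi q (N-1) (y/q) z * phi q N y z + q powi N * phi q (N-1) y z * phi q N (y/q) z
       = q powi N * (1 + z) * phi q N (y/q) (z/q) * phi q (N-1) y (q*z)"  (is ?E2)
    and "y * phi q (N-1) y z * phi q N (y/q) (z/q) + z * phi q (N-1) (y/q) (z/q) * phi q N y z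
       = (y + z) * phi q (N-1) y (z/q) * phi q N (y/q) z"  (is ?E3)
    and "z * phi q (N-1) y z * phi q N (y/q) (z/q) + y * phi q (N-1) (y/q) (z/q) * phi q N y z
       = (y + z) * phi q N y (z/q) * phi q (N-1) (y/q) z"  (is ?E4)
proof -
  have "?E1 \<and> ?E2 \<and> ?E3 \<and> ?E4"
  proof (cases "N \<ge> 1")
    case True
    define m where "m = nat (N - 1)"
    have N1: "nat N = Suc m" "nat (N - 1) = m" using True unfolding m_def by auto
    have pN: "q powi N = q ^ Suc m"
      using True N1 by (simp add: power_int_def)
    have P: "phi q N y' z' = phi_nat q (Suc m) y' z'" "phi q (N-1) y' z' = phi_nat q m y' z'" for y' z'
      using True by (simp_all add: phi_pos N1)
    note A = E12nat_phi[OF q0 qn, where m=m and y=y and z=z] E34nat[OF q0 qn refl, where m=m and y=y and z=z]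
    have e1: ?E1 unfolding P pN by (rule A(1))
    have e2: ?E2 unfolding P pN by (rule A(2))
    have e3: ?E3 unfolding P by (rule A(3))
    have e4: ?E4 unfolding P by (rule A(4))
    show ?thesis using e1 e2 e3 e4 by blast
  next
    case False
    show ?thesis
    proof (cases "N = 0")
      case True
      have "phi q (-1) y' z' = 1" "phi q 0 y' z' = 1" for y' z'
        by (auto simp: phi_def phi_nat_def)
      then show ?thesis using True by simp
    next
      case False
      with \<open>\<not> N \<ge> 1\<close> have Nn: "N < 0" by simp
      define M where "M = nat (- N - 1)"
      have MN: "nat (- (N - 1) - 1) = Suc M" using Nn unfolding M_def by simp
      define s1 :: complex where "s1 = (-1) ^ nat (N * (N + 1) div 2)"
      define s2 :: complex where "s2 = (-1) ^ nat ((N - 1) * (N - 1 + 1) div 2)"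
      have P: "phi q N y' z' = s1 * phi_nat q M y' z'" "phi q (N-1) y' z' = s2 * phi_nat q (Suc M) y' z'" for y' z'
        using Nn MN unfolding s1_def s2_def M_def by (auto simp: phi_neg)
      have nN: "nat (- N) = Suc M" using Nn unfolding M_def by simp
      have pN: "q powi N = 1 / q ^ Suc M"
        using Nn by (simp add: power_int_def nN power_inverse inverse_eq_divide power_one_over)
      have Q0: "q ^ Suc M \<noteq> 0" using q0 by simp
      note A = E12nat_phi[OF q0 qn, where m=M and y=y and z=z] E34nat[OF q0 qn refl, where m=M and y=y and z=z]
      have e1: ?E1
        unfolding P pN by (rule gen1[OF Q0 A(2)])
      have e2: ?E2
        unfolding P pN by (rule gen2[OF Q0 A(1)])
      have e3: ?E3
        unfolding P by (rule gen3[OF A(4)])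
      have e4: ?E4
        unfolding P by (rule gen4[OF A(3)])
      show ?thesis using e1 e2 e3 e4 by blast
    qed
  qed
  then show ?E1 ?E2 ?E3 ?E4 by blast+
qed



lemma gfin1:
  fixes a1 a2 a4 a5 a6 b1 b2 p W :: complex
  assumes "a1 \<noteq> 0" "a2 \<noteq> 0" "a4 \<noteq> 0" "a5 \<noteq> 0" "a6 \<noteq> 0" "b2 \<noteq> 0" "p \<noteq> 0" "W \<noteq> 0"
  shows "a1 * b1 / (b2 * a4) = p ^ 2 / (p * a4 * a5 / (a1 * a6)) * ((W * a5 * b1 / (a1 * a2)) / (p * W * a6 * b2 / (a1 * a2)))"
  using assms by (simp add: field_simps power2_eq_square)

lemma gfin2:
  fixes a1 a3 a4 a5 a6 c1 c2 p z W :: complex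
  assumes "a1 \<noteq> 0" "a3 \<noteq> 0" "a4 \<noteq> 0" "a5 \<noteq> 0" "a6 \<noteq> 0" "c2 \<noteq> 0" "p \<noteq> 0" "z \<noteq> 0" "W \<noteq> 0"
  shows "p * (c1 * a6) / (a5 * c2) = p ^ 2 / (p * a4 * a5 / (a1 * a6)) * ((W * c1 * a4 / (z * a3 * a6)) / (W * c2 * a1 / (z * a3 * a6)))"
  using assms by (simp add: field_simps power2_eq_square)

lemma pain1:
  fixes a1 a2 a3 a4 a5 a6 b1 b2 p z f0 f1 :: complex
  assumes nz: "a1 \<noteq> 0" "a2 \<noteq> 0" "a3 \<noteq> 0" "a4 \<noteq> 0" "a5 \<noteq> 0" "a6 \<noteq> 0" "b2 \<noteq> 0" "p \<noteq> 0"
    and f0: "f0 = p * (a3 * a4) / (a1 * a2)" and f1: "f1 = (a5 * a2) / (a3 * a6)"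
    and E1: "a1 * a2 + z * p * a3 * a4 = (1 + z) * a5 * b1"
    and E2: "z * a1 * a2 + p * a3 * a4 = p * (1 + z) * a6 * b2"
    and zf: "z + f0 \<noteq> 0"
  shows "a1 * b1 / (b2 * a4) = p ^ 2 / (f0 * f1) * ((1 + z * f0) / (z + f0))"
proof -
  have s: "z + f0 = p * (1 + z) * a6 * b2 / (a1 * a2)"
  proof -
    have "z + f0 = (z * a1 * a2 + p * a3 * a4) / (a1 * a2)" unfolding f0 using nz by (simp add: field_simps)
    then show ?thesis unfolding E2 .
  qed
  have t: "1 + z * f0 = (1 + z) * a5 * b1 / (a1 * a2)"
  proof -
    have "1 + z * f0 = (a1 * a2 + z * p * a3 * a4) / (a1 * a2)" unfolding f0 using nz by (simp add: field_simps)
    then show ?thesis unfolding E1 .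
  qed
  have u: "f0 * f1 = p * a4 * a5 / (a1 * a6)" unfolding f0 f1 using nz by (simp add: field_simps)
  have z1: "1 + z \<noteq> 0" using zf unfolding s by auto
  show ?thesis unfolding s t u using gfin1[OF nz(1,2,4,5,6,7,8) z1] .
qed

lemma pain2:
  fixes a1 a2 a3 a4 a5 a6 c1 c2 p y z f0 f1 :: complex
  assumes nz: "a1 \<noteq> 0" "a2 \<noteq> 0" "a3 \<noteq> 0" "a4 \<noteq> 0" "a5 \<noteq> 0" "a6 \<noteq> 0" "c2 \<noteq> 0" "p \<noteq> 0" "z \<noteq> 0"
    and f0: "f0 = p * (a3 * a4) / (a1 * a2)" and f1: "f1 = (a5 * a2) / (a3 * a6)"
    and E3: "y * a3 * a6 + z * a5 * a2 = (y + z) * c1 * a4"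
    and E4: "z * a3 * a6 + y * a5 * a2 = (y + z) * c2 * a1"
    and yf: "1 + (y / z) * f1 \<noteq> 0"
  shows "p * (c1 * a6) / (a5 * c2) = p ^ 2 / (f0 * f1) * ((y / z + f1) / (1 + (y / z) * f1))"
proof -
  have s: "1 + (y / z) * f1 = (y + z) * c2 * a1 / (z * a3 * a6)"
  proof -
    have "1 + (y / z) * f1 = (z * a3 * a6 + y * a5 * a2) / (z * a3 * a6)" unfolding f1 using nz by (simp add: field_simps)
    then show ?thesis unfolding E4 .
  qed
  have t: "y / z + f1 = (y + z) * c1 * a4 / (z * a3 * a6)"
  proof -
    have "y / z + f1 = (y * a3 * a6 + z * a5 * a2) / (z * a3 * a6)" unfolding f1 using nz by (simp add: field_simps)
    then show ?thesis unfolding E3 .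
  qed
  have u: "f0 * f1 = p * a4 * a5 / (a1 * a6)" unfolding f0 f1 using nz by (simp add: field_simps)
  have z1: "y + z \<noteq> 0" using yf unfolding s by auto
  show ?thesis unfolding s t u using gfin2[OF nz(1,3,4,5,6,7,8,9) z1] .
qed

theorem theorem4:
  fixes q y z :: complex and N :: int
  assumes "q \<noteq> 0" and "\<forall>n::nat. n > 0 \<longrightarrow> q ^ n \<noteq> 1"
    and "z \<noteq> 0"
    and "phi q (N - 1) (y / q) z \<noteq> 0" and "phi q N y z \<noteq> 0"
    and "phi q (N - 1) y z \<noteq> 0" and "phi q N (y / q) (z / q) \<noteq> 0"
    and "f0 q N y z * f1 q N y z \<noteq> 0"
  shows "(phi q (N - 1) y (q * z) \<noteq> 0 \<and> phi q N (y / q) z \<noteq> 0 \<and> z + f0 q N y z \<noteq> 0 \<longrightarrow>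
           f1 q N y (q * z) = (q powi N) ^ 2 / (f0 q N y z * f1 q N y z)
              * ((1 + z * f0 q N y z) / (z + f0 q N y z)))
       \<and> (phi q (N - 1) (y / q) (z / q) \<noteq> 0 \<and> phi q N y (z / q) \<noteq> 0
           \<and> 1 + (y / z) * f1 q N y z \<noteq> 0 \<longrightarrow>
           f0 q N y (z / q) = (q powi N) ^ 2 / (f0 q N y z * f1 q N y z)
              * ((y / z + f1 q N y z) / (1 + (y / z) * f1 q N y z)))"
proof -
  note E = EZ[OF assms(1) assms(2), where N=N and y=y and z=z]
  have f0e: "f0 q N y z = q powi N * (phi q (N - 1) y z * phi q N (y / q) z) / (phi q (N - 1) (y / q) z * phi q N y z)"
    by (simp add: f0_def)
  have f1e: "f1 q N y z = (phi q (N - 1) (y / q) (z / q) * phi q N y z) / (phi q (N - 1) y z * phi q N (y / q) (z / q))"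
    by (simp add: f1_def)
  have f0ne: "f0 q N y z \<noteq> 0" and f1ne: "f1 q N y z \<noteq> 0" using assms(8) by auto
  have pne: "q powi N \<noteq> 0" and a4: "phi q N (y / q) z \<noteq> 0" using f0ne unfolding f0e by auto
  have a5: "phi q (N - 1) (y / q) (z / q) \<noteq> 0" using f1ne unfolding f1e by auto
  have qz: "q * z / q = z" using assms(1) by simp
  show ?thesis
  proof (intro conjI impI)
    assume h: "phi q (N - 1) y (q * z) \<noteq> 0 \<and> phi q N (y / q) z \<noteq> 0 \<and> z + f0 q N y z \<noteq> 0"
    have "f1 q N y (q * z) = phi q (N - 1) (y / q) z * phi q N y (q * z) / (phi q (N - 1) y (q * z) * phi q N (y / q) z)"
      unfolding f1_def qz ..
    also have "\<dots> = (q powi N) ^ 2 / (f0 q N y z * f1 q N y z) * ((1 + z * f0 q N y z) / (z + f0 q N y z))"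
      by (rule pain1[OF assms(4) assms(5) assms(6) a4 a5 assms(7) _ pne f0e f1e E(1) E(2)]) (use h in auto)
    finally show "f1 q N y (q * z) = (q powi N) ^ 2 / (f0 q N y z * f1 q N y z) * ((1 + z * f0 q N y z) / (z + f0 q N y z))" .
  next
    assume h: "phi q (N - 1) (y / q) (z / q) \<noteq> 0 \<and> phi q N y (z / q) \<noteq> 0 \<and> 1 + y / z * f1 q N y z \<noteq> 0"
    have "f0 q N y (z / q) = q powi N * (phi q (N - 1) y (z / q) * phi q N (y / q) (z / q)) / (phi q (N - 1) (y / q) (z / q) * phi q N y (z / q))"
      unfolding f0_def ..
    also have "\<dots> = (q powi N) ^ 2 / (f0 q N y z * f1 q N y z) * ((y / z + f1 q N y z) / (1 + (y / z) * f1 q N y z))"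
      by (rule pain2[OF assms(4) assms(5) assms(6) a4 a5 assms(7) _ pne assms(3) f0e f1e E(3) E(4)]) (use h in auto)
    finally show "f0 q N y (z / q) = (q powi N) ^ 2 / (f0 q N y z * f1 q N y z) * ((y / z + f1 q N y z) / (1 + y / z * f1 q N y z))" .
  qed
qed


end
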